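(* Let $G$ be a 5-vertex-critical $(P_5,\text{chair})$-free graph and let $C=v_1v_2v_3v_4v_5v_1$ be an induced $C_5$ in $G$. Then for every $1\le i\le 5$, every vertex of $V(G)\setminus(S^2_3(i)\cup S_4(i)\cup S_5)$ is either complete or anticomplete to $S^2_3(i)$.
   Context: All graphs are finite and simple; $P_5$ is the path on 5 vertices; the chair is a $P_4$ plus a vertex adjacent to exactly one of the two middle vertices of the $P_4$; "$H$-free" means no induced subgraph isomorphic to $H$; $G$ is $k$-vertex-critical if $\chi(G)=k$ and $\chi(G-v)<k$ for all $v$. Indices modulo 5; for $v\notin V(C)$ let $N_C(v)=N(v)\cap V(C)$. $S^2_3(i)=\{v\notin V(C): N_C(v)=\{v_{i-2},v_i,v_{i+2}\}\}$, $S_4(i)=\{v\notin V(C): N_C(v)=\{v_{i-2},v_{i-1},v_{i+1},v_{i+2}\}\}$, $S_5=\{v\notin V(C): N_C(v)=V(C)\}$. Complete/anticomplete: adjacent/nonadjacent to every vertex of the set. *)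

theory Defs
  imports Main
begin

definition simple_graph :: "'a set \<Rightarrow> ('a \<Rightarrow> 'a \<Rightarrow> bool) \<Rightarrow> bool" where
  "simple_graph V E \<longleftrightarrow> finite V \<and> (\<forall>x y. E x y \<longrightarrow> x \<in> V \<and> y \<in> V)
     \<and> (\<forall>x y. E x y \<longrightarrow> E y x) \<and> (\<forall>x. \<not> E x x)"

definition colorable :: "'a set \<Rightarrow> ('a \<Rightarrow> 'a \<Rightarrow> bool) \<Rightarrow> nat \<Rightarrow> bool" where
  "colorable V E k \<longleftrightarrow> (\<exists>c :: 'a \<Rightarrow> nat. (\<forall>v\<in>V. c v < k)
      \<and> (\<forall>u\<in>V. \<forall>v\<in>V. E u v \<longrightarrow> c u \<noteq> c v))"

definition chromatic_number :: "'a set \<Rightarrow> ('a \<Rightarrow> 'a \<Rightarrow> bool) \<Rightarrow> nat" where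
  "chromatic_number V E = (LEAST k. colorable V E k)"

text \<open>k-vertex-critical: chi(G) = k and chi(G - v) < k for every vertex v.
  G - v is the subgraph induced by V - {v} (colourings only look at edges inside the set).\<close>
definition vertex_critical :: "'a set \<Rightarrow> ('a \<Rightarrow> 'a \<Rightarrow> bool) \<Rightarrow> nat \<Rightarrow> bool" where
  "vertex_critical V E k \<longleftrightarrow> chromatic_number V E = k
     \<and> (\<forall>v\<in>V. chromatic_number (V - {v}) E < k)"

definition has_induced :: "'a set \<Rightarrow> ('a \<Rightarrow> 'a \<Rightarrow> bool) \<Rightarrow> 'b set \<Rightarrow> ('b \<Rightarrow> 'b \<Rightarrow> bool) \<Rightarrow> bool" where
  "has_induced V E VH EH \<longleftrightarrow> (\<exists>f. inj_on f VH \<and> f ` VH \<subseteq> V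
      \<and> (\<forall>x\<in>VH. \<forall>y\<in>VH. E (f x) (f y) \<longleftrightarrow> EH x y))"

definition H_free :: "'a set \<Rightarrow> ('a \<Rightarrow> 'a \<Rightarrow> bool) \<Rightarrow> 'b set \<Rightarrow> ('b \<Rightarrow> 'b \<Rightarrow> bool) \<Rightarrow> bool" where
  "H_free V E VH EH \<longleftrightarrow> \<not> has_induced V E VH EH"

definition P5_E :: "nat \<Rightarrow> nat \<Rightarrow> bool" where
  "P5_E x y \<longleftrightarrow> x = y + 1 \<or> y = x + 1"

definition chair_E :: "nat \<Rightarrow> nat \<Rightarrow> bool" where
  "chair_E x y \<longleftrightarrow> (x < 4 \<and> y < 4 \<and> (x = y + 1 \<or> y = x + 1))
     \<or> {x, y} = {1, 4}"

text \<open>v 0, ..., v 4 form an induced C5 (v_i adjacent v_{i+1 mod 5}); indices are taken mod 5,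
  so the paper's v_1..v_5 correspond to v 1, ..., v 4, v 0.\<close>
definition induced_C5 :: "'a set \<Rightarrow> ('a \<Rightarrow> 'a \<Rightarrow> bool) \<Rightarrow> (nat \<Rightarrow> 'a) \<Rightarrow> bool" where
  "induced_C5 V E v \<longleftrightarrow> (\<forall>i<5. v i \<in> V) \<and> inj_on v {..<5}
     \<and> (\<forall>i<5. \<forall>j<5. E (v i) (v j) \<longleftrightarrow> (j = (i + 1) mod 5 \<or> i = (j + 1) mod 5))"

definition C5_set :: "(nat \<Rightarrow> 'a) \<Rightarrow> 'a set" where
  "C5_set v = v ` {..<5}"

definition N_C :: "('a \<Rightarrow> 'a \<Rightarrow> bool) \<Rightarrow> (nat \<Rightarrow> 'a) \<Rightarrow> 'a \<Rightarrow> 'a set" where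
  "N_C E v u = {w \<in> C5_set v. E u w}"

text \<open>S^2_3(i): N_C = {v_{i-2}, v_i, v_{i+2}}  (i-2 = i+3 mod 5).\<close>
definition S23 :: "'a set \<Rightarrow> ('a \<Rightarrow> 'a \<Rightarrow> bool) \<Rightarrow> (nat \<Rightarrow> 'a) \<Rightarrow> nat \<Rightarrow> 'a set" where
  "S23 V E v i = {u \<in> V - C5_set v.
      N_C E v u = {v ((i + 3) mod 5), v (i mod 5), v ((i + 2) mod 5)}}"

text \<open>S_4(i): N_C = {v_{i-2}, v_{i-1}, v_{i+1}, v_{i+2}}.\<close>
definition S4 :: "'a set \<Rightarrow> ('a \<Rightarrow> 'a \<Rightarrow> bool) \<Rightarrow> (nat \<Rightarrow> 'a) \<Rightarrow> nat \<Rightarrow> 'a set" where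
  "S4 V E v i = {u \<in> V - C5_set v.
      N_C E v u = {v ((i + 3) mod 5), v ((i + 4) mod 5), v ((i + 1) mod 5), v ((i + 2) mod 5)}}"

definition S5 :: "'a set \<Rightarrow> ('a \<Rightarrow> 'a \<Rightarrow> bool) \<Rightarrow> (nat \<Rightarrow> 'a) \<Rightarrow> 'a set" where
  "S5 V E v = {u \<in> V - C5_set v. N_C E v u = C5_set v}"

definition complete_to :: "('a \<Rightarrow> 'a \<Rightarrow> bool) \<Rightarrow> 'a \<Rightarrow> 'a set \<Rightarrow> bool" where
  "complete_to E x S \<longleftrightarrow> (\<forall>s\<in>S. E x s)"

definition anticomplete_to :: "('a \<Rightarrow> 'a \<Rightarrow> bool) \<Rightarrow> 'a \<Rightarrow> 'a set \<Rightarrow> bool" where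
  "anticomplete_to E x S \<longleftrightarrow> (\<forall>s\<in>S. \<not> E x s)"

end

theory Submission imports Defs begin


lemma P5w:
  assumes free: "H_free V E {0..<5::nat} P5_E" and symm: "\<And>a b. E a b \<Longrightarrow> E b a" and irr: "\<And>a. \<not> E a a"
    and "pa \<in> V" "pb \<in> V" "pc \<in> V" "pd \<in> V" "pe \<in> V"
    and "distinct [pa,pb,pc,pd,pe]"
    and "E pa pb" "E pb pc" "E pc pd" "E pd pe"
    and "\<not> E pa pc" "\<not> E pa pd" "\<not> E pa pe" "\<not> E pb pd" "\<not> E pb pe" "\<not> E pc pe"
  shows False
proof -
  have s: "E a b = E b a" for a b using symm by blast
  have "has_induced V E {0..<5::nat} P5_E"
    unfolding has_induced_def
  proof (intro exI[of _ "\<lambda>n. [pa,pb,pc,pd,pe] ! n"] conjI)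
    have e: "{0..<5::nat} = {0,1,2,3,4}" by auto
    show "inj_on (\<lambda>n. [pa, pb, pc, pd, pe] ! n) {0..<5}"
      unfolding e using assms(9) by (auto simp: inj_on_def)
    show "(\<lambda>n. [pa, pb, pc, pd, pe] ! n) ` {0..<5} \<subseteq> V" unfolding e using assms by auto
    show "\<forall>x\<in>{0..<5}. \<forall>y\<in>{0..<5}. E ([pa, pb, pc, pd, pe] ! x) ([pa, pb, pc, pd, pe] ! y) = P5_E x y"
      unfolding e using assms(10-) by (simp add: P5_E_def s irr)
  qed
  then show False using free by (simp add: H_free_def)
qed

lemma CHw:
  assumes free: "H_free V E {0..<5::nat} chair_E" and symm: "\<And>a b. E a b \<Longrightarrow> E b a" and irr: "\<And>a. \<not> E a a"
    and "pa \<in> V" "pb \<in> V" "pc \<in> V" "pd \<in> V" "pe \<in> V"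
    and "distinct [pa,pb,pc,pd,pe]"
    and "E pa pb" "E pb pc" "E pc pd" "E pb pe"
    and "\<not> E pa pc" "\<not> E pa pd" "\<not> E pa pe" "\<not> E pb pd" "\<not> E pc pe" "\<not> E pd pe"
  shows False
proof -
  have s: "E a b = E b a" for a b using symm by blast
  have "has_induced V E {0..<5::nat} chair_E"
    unfolding has_induced_def
  proof (intro exI[of _ "\<lambda>n. [pa,pb,pc,pd,pe] ! n"] conjI)
    have e: "{0..<5::nat} = {0,1,2,3,4}" by auto
    show "inj_on (\<lambda>n. [pa, pb, pc, pd, pe] ! n) {0..<5}"
      unfolding e using assms(9) by (auto simp: inj_on_def)
    show "(\<lambda>n. [pa, pb, pc, pd, pe] ! n) ` {0..<5} \<subseteq> V" unfolding e using assms by auto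
    show "\<forall>x\<in>{0..<5}. \<forall>y\<in>{0..<5}. E ([pa, pb, pc, pd, pe] ! x) ([pa, pb, pc, pd, pe] ! y) = chair_E x y"
      unfolding e using assms(10-) by (simp add: chair_E_def doubleton_eq_iff s irr)
  qed
  then show False using free by (simp add: H_free_def)
qed
lemma memset: "{c\<in>A. P c} = S \<Longrightarrow> a \<in> A \<Longrightarrow> P a \<longleftrightarrow> a \<in> S" by blast
lemma coll_ins: "{c \<in> insert a B. P c} = (if P a then insert a {c\<in>B. P c} else {c\<in>B. P c})" by auto

lemma core:
  assumes P5free: "H_free V E {0..<5::nat} P5_E" and chairfree: "H_free V E {0..<5::nat} chair_E"
    and symm: "\<And>a b. E a b \<Longrightarrow> E b a" and irr: "\<And>a. \<not> E a a"
    and inV: "a0 \<in> V" "a1 \<in> V" "a2 \<in> V" "a3 \<in> V" "a4 \<in> V" "u \<in> V" "w \<in> V" "x \<in> V"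
    and dA: "distinct [a0,a1,a2,a3,a4]"
    and cyc: "E a0 a1" "E a1 a2" "E a2 a3" "E a3 a4" "E a4 a0"
      "\<not>E a0 a2" "\<not>E a0 a3" "\<not>E a1 a3" "\<not>E a1 a4" "\<not>E a2 a4"
    and uA: "u \<notin> {a0,a1,a2,a3,a4}" and wA: "w \<notin> {a0,a1,a2,a3,a4}"
    and Nu: "{c\<in>{a0,a1,a2,a3,a4}. E u c} = {a3,a0,a2}" and Nw: "{c\<in>{a0,a1,a2,a3,a4}. E w c} = {a3,a0,a2}"
    and ex1: "x \<notin> {a0,a1,a2,a3,a4} \<Longrightarrow> {c\<in>{a0,a1,a2,a3,a4}. E x c} \<noteq> {a3,a0,a2}"
    and ex2: "x \<notin> {a0,a1,a2,a3,a4} \<Longrightarrow> {c\<in>{a0,a1,a2,a3,a4}. E x c} \<noteq> {a3,a4,a1,a2}"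
    and ex3: "x \<notin> {a0,a1,a2,a3,a4} \<Longrightarrow> {c\<in>{a0,a1,a2,a3,a4}. E x c} \<noteq> {a0,a1,a2,a3,a4}"
    and xu: "E x u" and xw: "\<not> E x w"
  shows False
proof -
  have nsym: "\<not> E p q \<Longrightarrow> \<not> E q p" for p q using symm by blast
  have ul: "E u a0" "E u a2" "E u a3" "\<not>E u a1" "\<not>E u a4"
    using memset[OF Nu, of a0] memset[OF Nu, of a1] memset[OF Nu, of a2] memset[OF Nu, of a3] memset[OF Nu, of a4] dA by (simp_all) blast+
  have wl: "E w a0" "E w a2" "E w a3" "\<not>E w a1" "\<not>E w a4"
    using memset[OF Nw, of a0] memset[OF Nw, of a1] memset[OF Nw, of a2] memset[OF Nw, of a3] memset[OF Nw, of a4] dA by (simp_all) blast+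
  show False
  proof (cases "x \<in> {a0,a1,a2,a3,a4}")
    case True
    then have "x = a0 \<or> x = a1 \<or> x = a2 \<or> x = a3 \<or> x = a4" by simp
    then show False using ul wl xu xw symm by (elim disjE) (metis, metis, metis, metis, metis)
  next
    case xA: False
    have ex1': "\<not>(E x a0 \<and> \<not>E x a1 \<and> E x a2 \<and> E x a3 \<and> \<not>E x a4)"
    proof
      assume H: "E x a0 \<and> \<not>E x a1 \<and> E x a2 \<and> E x a3 \<and> \<not>E x a4"
      have "{c\<in>{a0,a1,a2,a3,a4}. E x c} = {a3,a0,a2}" unfolding coll_ins using H by auto
      with ex1 xA show False by blast
    qed
    have ex2': "\<not>(\<not>E x a0 \<and> E x a1 \<and> E x a2 \<and> E x a3 \<and> E x a4)"
    proof
      assume H: "\<not>E x a0 \<and> E x a1 \<and> E x a2 \<and> E x a3 \<and> E x a4"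
      have "{c\<in>{a0,a1,a2,a3,a4}. E x c} = {a3,a4,a1,a2}" unfolding coll_ins using H by auto
      with ex2 xA show False by blast
    qed
    have ex3': "\<not>(E x a0 \<and> E x a1 \<and> E x a2 \<and> E x a3 \<and> E x a4)"
    proof
      assume H: "E x a0 \<and> E x a1 \<and> E x a2 \<and> E x a3 \<and> E x a4"
      have "{c\<in>{a0,a1,a2,a3,a4}. E x c} = {a0,a1,a2,a3,a4}" unfolding coll_ins using H by auto
      with ex3 xA show False by blast
    qed
    have xnw: "x \<noteq> w"
    proof
      assume "x = w"
      with Nw ex1 xA show False by blast
    qed
    have uw: "u \<noteq> w" using xu xw by blast
    have xnu: "x \<noteq> u" using xu irr by blast
    have dAll: "distinct [a0,a1,a2,a3,a4,u,w,x]" using dA uA wA xA xnw uw xnu by (simp) blast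
    have Fd: "a0 \<noteq> a1" "a0 \<noteq> a2" "a0 \<noteq> a3" "a0 \<noteq> a4" "a0 \<noteq> u" "a0 \<noteq> w" "a0 \<noteq> x" "a1 \<noteq> a0" "a1 \<noteq> a2" "a1 \<noteq> a3" "a1 \<noteq> a4" "a1 \<noteq> u" "a1 \<noteq> w" "a1 \<noteq> x" "a2 \<noteq> a0" "a2 \<noteq> a1" "a2 \<noteq> a3" "a2 \<noteq> a4" "a2 \<noteq> u" "a2 \<noteq> w" "a2 \<noteq> x" "a3 \<noteq> a0" "a3 \<noteq> a1" "a3 \<noteq> a2" "a3 \<noteq> a4" "a3 \<noteq> u" "a3 \<noteq> w" "a3 \<noteq> x" "a4 \<noteq> a0" "a4 \<noteq> a1" "a4 \<noteq> a2" "a4 \<noteq> a3" "a4 \<noteq> u" "a4 \<noteq> w" "a4 \<noteq> x" "u \<noteq> a0" "u \<noteq> a1" "u \<noteq> a2" "u \<noteq> a3" "u \<noteq> a4" "u \<noteq> w" "u \<noteq> x" "w \<noteq> a0" "w \<noteq> a1" "w \<noteq> a2" "w \<noteq> a3" "w \<noteq> a4" "w \<noteq> u" "w \<noteq> x" "x \<noteq> a0" "x \<noteq> a1" "x \<noteq> a2" "x \<noteq> a3" "x \<noteq> a4" "x \<noteq> u" "x \<noteq> w" using dAll by (simp_all) blast+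
    note Fe = cyc(1-5) symm[OF cyc(1)] symm[OF cyc(2)] symm[OF cyc(3)] symm[OF cyc(4)] symm[OF cyc(5)]
      cyc(6-10) nsym[OF cyc(6)] nsym[OF cyc(7)] nsym[OF cyc(8)] nsym[OF cyc(9)] nsym[OF cyc(10)]
      ul wl symm[OF ul(1)] symm[OF ul(2)] symm[OF ul(3)] nsym[OF ul(4)] nsym[OF ul(5)]
      symm[OF wl(1)] symm[OF wl(2)] symm[OF wl(3)] nsym[OF wl(4)] nsym[OF wl(5)]
      xu xw symm[OF xu] nsym[OF xw]
    have ex1r: "E x a0 \<Longrightarrow> \<not>E x a1 \<Longrightarrow> E x a2 \<Longrightarrow> E x a3 \<Longrightarrow> \<not>E x a4 \<Longrightarrow> False" using ex1' by blast
    have ex2r: "\<not>E x a0 \<Longrightarrow> E x a1 \<Longrightarrow> E x a2 \<Longrightarrow> E x a3 \<Longrightarrow> E x a4 \<Longrightarrow> False" using ex2' by blast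
    have ex3r: "E x a0 \<Longrightarrow> E x a1 \<Longrightarrow> E x a2 \<Longrightarrow> E x a3 \<Longrightarrow> E x a4 \<Longrightarrow> False" using ex3' by blast
    note F = Fd Fe inV
  have c1: False if h: "\<not>E x a0" "\<not>E x a1" "\<not>E x a2" "\<not>E x a3" "\<not>E x a4" "\<not>E u w"
  proof -
    note h2 = nsym[OF h(1)] nsym[OF h(2)] nsym[OF h(3)] nsym[OF h(4)] nsym[OF h(5)] nsym[OF h(6)]
    show False by (rule CHw[where pa=a3 and pb=u and pc=a0 and pd=a1 and pe=x, OF chairfree symm irr]) (simp_all add: F h h2)
  qed
  have c2: False if h: "\<not>E x a0" "\<not>E x a1" "\<not>E x a2" "\<not>E x a3" "\<not>E x a4" "E u w"
  proof -
    note h2 = nsym[OF h(1)] nsym[OF h(2)] nsym[OF h(3)] nsym[OF h(4)] nsym[OF h(5)] symm[OF h(6)]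
    show False by (rule CHw[where pa=a3 and pb=u and pc=a0 and pd=a1 and pe=x, OF chairfree symm irr]) (simp_all add: F h h2)
  qed
  have c3: False if h: "E x a0" "\<not>E x a1" "\<not>E x a2" "\<not>E x a3" "\<not>E x a4" "\<not>E u w"
  proof -
    note h2 = symm[OF h(1)] nsym[OF h(2)] nsym[OF h(3)] nsym[OF h(4)] nsym[OF h(5)] nsym[OF h(6)]
    show False by (rule P5w[where pa=a3 and pb=a2 and pc=a1 and pd=a0 and pe=x, OF P5free symm irr]) (simp_all add: F h h2)
  qed
  have c4: False if h: "E x a0" "\<not>E x a1" "\<not>E x a2" "\<not>E x a3" "\<not>E x a4" "E u w"
  proof -
    note h2 = symm[OF h(1)] nsym[OF h(2)] nsym[OF h(3)] nsym[OF h(4)] nsym[OF h(5)] symm[OF h(6)]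
    show False by (rule P5w[where pa=a3 and pb=a2 and pc=a1 and pd=a0 and pe=x, OF P5free symm irr]) (simp_all add: F h h2)
  qed
  have c5: False if h: "\<not>E x a0" "E x a1" "\<not>E x a2" "\<not>E x a3" "\<not>E x a4" "\<not>E u w"
  proof -
    note h2 = nsym[OF h(1)] symm[OF h(2)] nsym[OF h(3)] nsym[OF h(4)] nsym[OF h(5)] nsym[OF h(6)]
    show False by (rule P5w[where pa=a3 and pb=a4 and pc=a0 and pd=a1 and pe=x, OF P5free symm irr]) (simp_all add: F h h2)
  qed
  have c6: False if h: "\<not>E x a0" "E x a1" "\<not>E x a2" "\<not>E x a3" "\<not>E x a4" "E u w"
  proof -
    note h2 = nsym[OF h(1)] symm[OF h(2)] nsym[OF h(3)] nsym[OF h(4)] nsym[OF h(5)] symm[OF h(6)]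
    show False by (rule P5w[where pa=a3 and pb=a4 and pc=a0 and pd=a1 and pe=x, OF P5free symm irr]) (simp_all add: F h h2)
  qed
  have c7: False if h: "E x a0" "E x a1" "\<not>E x a2" "\<not>E x a3" "\<not>E x a4" "\<not>E u w"
  proof -
    note h2 = symm[OF h(1)] symm[OF h(2)] nsym[OF h(3)] nsym[OF h(4)] nsym[OF h(5)] nsym[OF h(6)]
    show False by (rule P5w[where pa=a2 and pb=a3 and pc=a4 and pd=a0 and pe=x, OF P5free symm irr]) (simp_all add: F h h2)
  qed
  have c8: False if h: "E x a0" "E x a1" "\<not>E x a2" "\<not>E x a3" "\<not>E x a4" "E u w"
  proof -
    note h2 = symm[OF h(1)] symm[OF h(2)] nsym[OF h(3)] nsym[OF h(4)] nsym[OF h(5)] symm[OF h(6)]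
    show False by (rule P5w[where pa=a2 and pb=a3 and pc=a4 and pd=a0 and pe=x, OF P5free symm irr]) (simp_all add: F h h2)
  qed
  have c9: False if h: "\<not>E x a0" "\<not>E x a1" "E x a2" "\<not>E x a3" "\<not>E x a4" "\<not>E u w"
  proof -
    note h2 = nsym[OF h(1)] nsym[OF h(2)] symm[OF h(3)] nsym[OF h(4)] nsym[OF h(5)] nsym[OF h(6)]
    show False by (rule P5w[where pa=a4 and pb=a0 and pc=a1 and pd=a2 and pe=x, OF P5free symm irr]) (simp_all add: F h h2)
  qed
  have c10: False if h: "\<not>E x a0" "\<not>E x a1" "E x a2" "\<not>E x a3" "\<not>E x a4" "E u w"
  proof -
    note h2 = nsym[OF h(1)] nsym[OF h(2)] symm[OF h(3)] nsym[OF h(4)] nsym[OF h(5)] symm[OF h(6)]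
    show False by (rule P5w[where pa=a4 and pb=a0 and pc=a1 and pd=a2 and pe=x, OF P5free symm irr]) (simp_all add: F h h2)
  qed
  have c11: False if h: "E x a0" "\<not>E x a1" "E x a2" "\<not>E x a3" "\<not>E x a4" "\<not>E u w"
  proof -
    note h2 = symm[OF h(1)] nsym[OF h(2)] symm[OF h(3)] nsym[OF h(4)] nsym[OF h(5)] nsym[OF h(6)]
    show False by (rule CHw[where pa=a1 and pb=a0 and pc=a4 and pd=a3 and pe=x, OF chairfree symm irr]) (simp_all add: F h h2)
  qed
  have c12: False if h: "E x a0" "\<not>E x a1" "E x a2" "\<not>E x a3" "\<not>E x a4" "E u w"
  proof -
    note h2 = symm[OF h(1)] nsym[OF h(2)] symm[OF h(3)] nsym[OF h(4)] nsym[OF h(5)] symm[OF h(6)]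
    show False by (rule CHw[where pa=a1 and pb=a0 and pc=a4 and pd=a3 and pe=x, OF chairfree symm irr]) (simp_all add: F h h2)
  qed
  have c13: False if h: "\<not>E x a0" "E x a1" "E x a2" "\<not>E x a3" "\<not>E x a4" "\<not>E u w"
  proof -
    note h2 = nsym[OF h(1)] symm[OF h(2)] symm[OF h(3)] nsym[OF h(4)] nsym[OF h(5)] nsym[OF h(6)]
    show False by (rule P5w[where pa=a3 and pb=a4 and pc=a0 and pd=a1 and pe=x, OF P5free symm irr]) (simp_all add: F h h2)
  qed
  have c14: False if h: "\<not>E x a0" "E x a1" "E x a2" "\<not>E x a3" "\<not>E x a4" "E u w"
  proof -
    note h2 = nsym[OF h(1)] symm[OF h(2)] symm[OF h(3)] nsym[OF h(4)] nsym[OF h(5)] symm[OF h(6)]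
    show False by (rule P5w[where pa=a3 and pb=a4 and pc=a0 and pd=a1 and pe=x, OF P5free symm irr]) (simp_all add: F h h2)
  qed
  have c15: False if h: "E x a0" "E x a1" "E x a2" "\<not>E x a3" "\<not>E x a4" "\<not>E u w"
  proof -
    note h2 = symm[OF h(1)] symm[OF h(2)] symm[OF h(3)] nsym[OF h(4)] nsym[OF h(5)] nsym[OF h(6)]
    show False by (rule P5w[where pa=a1 and pb=x and pc=u and pd=a3 and pe=a4, OF P5free symm irr]) (simp_all add: F h h2)
  qed
  have c16: False if h: "E x a0" "E x a1" "E x a2" "\<not>E x a3" "\<not>E x a4" "E u w"
  proof -
    note h2 = symm[OF h(1)] symm[OF h(2)] symm[OF h(3)] nsym[OF h(4)] nsym[OF h(5)] symm[OF h(6)]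
    show False by (rule P5w[where pa=a1 and pb=x and pc=u and pd=a3 and pe=a4, OF P5free symm irr]) (simp_all add: F h h2)
  qed
  have c17: False if h: "\<not>E x a0" "\<not>E x a1" "\<not>E x a2" "E x a3" "\<not>E x a4" "\<not>E u w"
  proof -
    note h2 = nsym[OF h(1)] nsym[OF h(2)] nsym[OF h(3)] symm[OF h(4)] nsym[OF h(5)] nsym[OF h(6)]
    show False by (rule P5w[where pa=a0 and pb=a1 and pc=a2 and pd=a3 and pe=x, OF P5free symm irr]) (simp_all add: F h h2)
  qed
  have c18: False if h: "\<not>E x a0" "\<not>E x a1" "\<not>E x a2" "E x a3" "\<not>E x a4" "E u w"
  proof -
    note h2 = nsym[OF h(1)] nsym[OF h(2)] nsym[OF h(3)] symm[OF h(4)] nsym[OF h(5)] symm[OF h(6)]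
    show False by (rule P5w[where pa=a0 and pb=a1 and pc=a2 and pd=a3 and pe=x, OF P5free symm irr]) (simp_all add: F h h2)
  qed
  have c19: False if h: "E x a0" "\<not>E x a1" "\<not>E x a2" "E x a3" "\<not>E x a4" "\<not>E u w"
  proof -
    note h2 = symm[OF h(1)] nsym[OF h(2)] nsym[OF h(3)] symm[OF h(4)] nsym[OF h(5)] nsym[OF h(6)]
    show False by (rule CHw[where pa=a4 and pb=a0 and pc=a1 and pd=a2 and pe=x, OF chairfree symm irr]) (simp_all add: F h h2)
  qed
  have c20: False if h: "E x a0" "\<not>E x a1" "\<not>E x a2" "E x a3" "\<not>E x a4" "E u w"
  proof -
    note h2 = symm[OF h(1)] nsym[OF h(2)] nsym[OF h(3)] symm[OF h(4)] nsym[OF h(5)] symm[OF h(6)]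
    show False by (rule CHw[where pa=a4 and pb=a0 and pc=a1 and pd=a2 and pe=x, OF chairfree symm irr]) (simp_all add: F h h2)
  qed
  have c21: False if h: "\<not>E x a0" "E x a1" "\<not>E x a2" "E x a3" "\<not>E x a4" "\<not>E u w"
  proof -
    note h2 = nsym[OF h(1)] symm[OF h(2)] nsym[OF h(3)] symm[OF h(4)] nsym[OF h(5)] nsym[OF h(6)]
    show False by (rule CHw[where pa=a2 and pb=a1 and pc=a0 and pd=a4 and pe=x, OF chairfree symm irr]) (simp_all add: F h h2)
  qed
  have c22: False if h: "\<not>E x a0" "E x a1" "\<not>E x a2" "E x a3" "\<not>E x a4" "E u w"
  proof -
    note h2 = nsym[OF h(1)] symm[OF h(2)] nsym[OF h(3)] symm[OF h(4)] nsym[OF h(5)] symm[OF h(6)]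
    show False by (rule CHw[where pa=a2 and pb=a1 and pc=a0 and pd=a4 and pe=x, OF chairfree symm irr]) (simp_all add: F h h2)
  qed
  have c23: False if h: "E x a0" "E x a1" "\<not>E x a2" "E x a3" "\<not>E x a4" "\<not>E u w"
  proof -
    note h2 = symm[OF h(1)] symm[OF h(2)] nsym[OF h(3)] symm[OF h(4)] nsym[OF h(5)] nsym[OF h(6)]
    show False by (rule CHw[where pa=a4 and pb=a0 and pc=w and pd=a2 and pe=x, OF chairfree symm irr]) (simp_all add: F h h2)
  qed
  have c24: False if h: "E x a0" "E x a1" "\<not>E x a2" "E x a3" "\<not>E x a4" "E u w"
  proof -
    note h2 = symm[OF h(1)] symm[OF h(2)] nsym[OF h(3)] symm[OF h(4)] nsym[OF h(5)] symm[OF h(6)]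
    show False by (rule CHw[where pa=a4 and pb=a0 and pc=w and pd=a2 and pe=x, OF chairfree symm irr]) (simp_all add: F h h2)
  qed
  have c25: False if h: "\<not>E x a0" "\<not>E x a1" "E x a2" "E x a3" "\<not>E x a4" "\<not>E u w"
  proof -
    note h2 = nsym[OF h(1)] nsym[OF h(2)] symm[OF h(3)] symm[OF h(4)] nsym[OF h(5)] nsym[OF h(6)]
    show False by (rule P5w[where pa=a4 and pb=a0 and pc=a1 and pd=a2 and pe=x, OF P5free symm irr]) (simp_all add: F h h2)
  qed
  have c26: False if h: "\<not>E x a0" "\<not>E x a1" "E x a2" "E x a3" "\<not>E x a4" "E u w"
  proof -
    note h2 = nsym[OF h(1)] nsym[OF h(2)] symm[OF h(3)] symm[OF h(4)] nsym[OF h(5)] symm[OF h(6)]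
    show False by (rule P5w[where pa=a4 and pb=a0 and pc=a1 and pd=a2 and pe=x, OF P5free symm irr]) (simp_all add: F h h2)
  qed
  have c27: False if h: "\<not>E x a0" "E x a1" "E x a2" "E x a3" "\<not>E x a4" "\<not>E u w"
  proof -
    note h2 = nsym[OF h(1)] symm[OF h(2)] symm[OF h(3)] symm[OF h(4)] nsym[OF h(5)] nsym[OF h(6)]
    show False by (rule P5w[where pa=a4 and pb=a0 and pc=w and pd=a2 and pe=x, OF P5free symm irr]) (simp_all add: F h h2)
  qed
  have c28: False if h: "\<not>E x a0" "E x a1" "E x a2" "E x a3" "\<not>E x a4" "E u w"
  proof -
    note h2 = nsym[OF h(1)] symm[OF h(2)] symm[OF h(3)] symm[OF h(4)] nsym[OF h(5)] symm[OF h(6)]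
    show False by (rule P5w[where pa=a4 and pb=a0 and pc=w and pd=a2 and pe=x, OF P5free symm irr]) (simp_all add: F h h2)
  qed
  have c29: False if h: "E x a0" "E x a1" "E x a2" "E x a3" "\<not>E x a4" "\<not>E u w"
  proof -
    note h2 = symm[OF h(1)] symm[OF h(2)] symm[OF h(3)] symm[OF h(4)] nsym[OF h(5)] nsym[OF h(6)]
    show False by (rule CHw[where pa=a4 and pb=a3 and pc=x and pd=a1 and pe=w, OF chairfree symm irr]) (simp_all add: F h h2)
  qed
  have c30: False if h: "E x a0" "E x a1" "E x a2" "E x a3" "\<not>E x a4" "E u w"
  proof -
    note h2 = symm[OF h(1)] symm[OF h(2)] symm[OF h(3)] symm[OF h(4)] nsym[OF h(5)] symm[OF h(6)]
    show False by (rule CHw[where pa=a4 and pb=a3 and pc=x and pd=a1 and pe=w, OF chairfree symm irr]) (simp_all add: F h h2)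
  qed
  have c31: False if h: "\<not>E x a0" "\<not>E x a1" "\<not>E x a2" "\<not>E x a3" "E x a4" "\<not>E u w"
  proof -
    note h2 = nsym[OF h(1)] nsym[OF h(2)] nsym[OF h(3)] nsym[OF h(4)] symm[OF h(5)] nsym[OF h(6)]
    show False by (rule P5w[where pa=a2 and pb=a1 and pc=a0 and pd=a4 and pe=x, OF P5free symm irr]) (simp_all add: F h h2)
  qed
  have c32: False if h: "\<not>E x a0" "\<not>E x a1" "\<not>E x a2" "\<not>E x a3" "E x a4" "E u w"
  proof -
    note h2 = nsym[OF h(1)] nsym[OF h(2)] nsym[OF h(3)] nsym[OF h(4)] symm[OF h(5)] symm[OF h(6)]
    show False by (rule P5w[where pa=a2 and pb=a1 and pc=a0 and pd=a4 and pe=x, OF P5free symm irr]) (simp_all add: F h h2)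
  qed
  have c33: False if h: "E x a0" "\<not>E x a1" "\<not>E x a2" "\<not>E x a3" "E x a4" "\<not>E u w"
  proof -
    note h2 = symm[OF h(1)] nsym[OF h(2)] nsym[OF h(3)] nsym[OF h(4)] symm[OF h(5)] nsym[OF h(6)]
    show False by (rule P5w[where pa=a3 and pb=a2 and pc=a1 and pd=a0 and pe=x, OF P5free symm irr]) (simp_all add: F h h2)
  qed
  have c34: False if h: "E x a0" "\<not>E x a1" "\<not>E x a2" "\<not>E x a3" "E x a4" "E u w"
  proof -
    note h2 = symm[OF h(1)] nsym[OF h(2)] nsym[OF h(3)] nsym[OF h(4)] symm[OF h(5)] symm[OF h(6)]
    show False by (rule P5w[where pa=a3 and pb=a2 and pc=a1 and pd=a0 and pe=x, OF P5free symm irr]) (simp_all add: F h h2)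
  qed
  have c35: False if h: "\<not>E x a0" "E x a1" "\<not>E x a2" "\<not>E x a3" "E x a4" "\<not>E u w"
  proof -
    note h2 = nsym[OF h(1)] symm[OF h(2)] nsym[OF h(3)] nsym[OF h(4)] symm[OF h(5)] nsym[OF h(6)]
    show False by (rule P5w[where pa=a3 and pb=w and pc=a0 and pd=a1 and pe=x, OF P5free symm irr]) (simp_all add: F h h2)
  qed
  have c36: False if h: "\<not>E x a0" "E x a1" "\<not>E x a2" "\<not>E x a3" "E x a4" "E u w"
  proof -
    note h2 = nsym[OF h(1)] symm[OF h(2)] nsym[OF h(3)] nsym[OF h(4)] symm[OF h(5)] symm[OF h(6)]
    show False by (rule P5w[where pa=a3 and pb=w and pc=a0 and pd=a1 and pe=x, OF P5free symm irr]) (simp_all add: F h h2)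
  qed
  have c37: False if h: "E x a0" "E x a1" "\<not>E x a2" "\<not>E x a3" "E x a4" "\<not>E u w"
  proof -
    note h2 = symm[OF h(1)] symm[OF h(2)] nsym[OF h(3)] nsym[OF h(4)] symm[OF h(5)] nsym[OF h(6)]
    show False by (rule P5w[where pa=a4 and pb=x and pc=a1 and pd=a2 and pe=w, OF P5free symm irr]) (simp_all add: F h h2)
  qed
  have c38: False if h: "E x a0" "E x a1" "\<not>E x a2" "\<not>E x a3" "E x a4" "E u w"
  proof -
    note h2 = symm[OF h(1)] symm[OF h(2)] nsym[OF h(3)] nsym[OF h(4)] symm[OF h(5)] symm[OF h(6)]
    show False by (rule P5w[where pa=a4 and pb=x and pc=a1 and pd=a2 and pe=w, OF P5free symm irr]) (simp_all add: F h h2)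
  qed
  have c39: False if h: "\<not>E x a0" "\<not>E x a1" "E x a2" "\<not>E x a3" "E x a4" "\<not>E u w"
  proof -
    note h2 = nsym[OF h(1)] nsym[OF h(2)] symm[OF h(3)] nsym[OF h(4)] symm[OF h(5)] nsym[OF h(6)]
    show False by (rule CHw[where pa=a3 and pb=a2 and pc=a1 and pd=a0 and pe=x, OF chairfree symm irr]) (simp_all add: F h h2)
  qed
  have c40: False if h: "\<not>E x a0" "\<not>E x a1" "E x a2" "\<not>E x a3" "E x a4" "E u w"
  proof -
    note h2 = nsym[OF h(1)] nsym[OF h(2)] symm[OF h(3)] nsym[OF h(4)] symm[OF h(5)] symm[OF h(6)]
    show False by (rule CHw[where pa=a3 and pb=a2 and pc=a1 and pd=a0 and pe=x, OF chairfree symm irr]) (simp_all add: F h h2)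
  qed
  have c41: False if h: "E x a0" "\<not>E x a1" "E x a2" "\<not>E x a3" "E x a4" "\<not>E u w"
  proof -
    note h2 = symm[OF h(1)] nsym[OF h(2)] symm[OF h(3)] nsym[OF h(4)] symm[OF h(5)] nsym[OF h(6)]
    show False by (rule CHw[where pa=a1 and pb=a0 and pc=w and pd=a3 and pe=x, OF chairfree symm irr]) (simp_all add: F h h2)
  qed
  have c42: False if h: "E x a0" "\<not>E x a1" "E x a2" "\<not>E x a3" "E x a4" "E u w"
  proof -
    note h2 = symm[OF h(1)] nsym[OF h(2)] symm[OF h(3)] nsym[OF h(4)] symm[OF h(5)] symm[OF h(6)]
    show False by (rule CHw[where pa=a1 and pb=a0 and pc=w and pd=a3 and pe=x, OF chairfree symm irr]) (simp_all add: F h h2)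
  qed
  have c43: False if h: "\<not>E x a0" "E x a1" "E x a2" "\<not>E x a3" "E x a4" "\<not>E u w"
  proof -
    note h2 = nsym[OF h(1)] symm[OF h(2)] symm[OF h(3)] nsym[OF h(4)] symm[OF h(5)] nsym[OF h(6)]
    show False by (rule P5w[where pa=a3 and pb=w and pc=a0 and pd=a1 and pe=x, OF P5free symm irr]) (simp_all add: F h h2)
  qed
  have c44: False if h: "\<not>E x a0" "E x a1" "E x a2" "\<not>E x a3" "E x a4" "E u w"
  proof -
    note h2 = nsym[OF h(1)] symm[OF h(2)] symm[OF h(3)] nsym[OF h(4)] symm[OF h(5)] symm[OF h(6)]
    show False by (rule P5w[where pa=a3 and pb=w and pc=a0 and pd=a1 and pe=x, OF P5free symm irr]) (simp_all add: F h h2)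
  qed
  have c45: False if h: "E x a0" "E x a1" "E x a2" "\<not>E x a3" "E x a4" "\<not>E u w"
  proof -
    note h2 = symm[OF h(1)] symm[OF h(2)] symm[OF h(3)] nsym[OF h(4)] symm[OF h(5)] nsym[OF h(6)]
    show False by (rule P5w[where pa=a1 and pb=x and pc=a4 and pd=a3 and pe=w, OF P5free symm irr]) (simp_all add: F h h2)
  qed
  have c46: False if h: "E x a0" "E x a1" "E x a2" "\<not>E x a3" "E x a4" "E u w"
  proof -
    note h2 = symm[OF h(1)] symm[OF h(2)] symm[OF h(3)] nsym[OF h(4)] symm[OF h(5)] symm[OF h(6)]
    show False by (rule P5w[where pa=a1 and pb=x and pc=a4 and pd=a3 and pe=w, OF P5free symm irr]) (simp_all add: F h h2)
  qed
  have c47: False if h: "\<not>E x a0" "\<not>E x a1" "\<not>E x a2" "E x a3" "E x a4" "\<not>E u w"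
  proof -
    note h2 = nsym[OF h(1)] nsym[OF h(2)] nsym[OF h(3)] symm[OF h(4)] symm[OF h(5)] nsym[OF h(6)]
    show False by (rule P5w[where pa=a0 and pb=a1 and pc=a2 and pd=a3 and pe=x, OF P5free symm irr]) (simp_all add: F h h2)
  qed
  have c48: False if h: "\<not>E x a0" "\<not>E x a1" "\<not>E x a2" "E x a3" "E x a4" "E u w"
  proof -
    note h2 = nsym[OF h(1)] nsym[OF h(2)] nsym[OF h(3)] symm[OF h(4)] symm[OF h(5)] symm[OF h(6)]
    show False by (rule P5w[where pa=a0 and pb=a1 and pc=a2 and pd=a3 and pe=x, OF P5free symm irr]) (simp_all add: F h h2)
  qed
  have c49: False if h: "E x a0" "\<not>E x a1" "\<not>E x a2" "E x a3" "E x a4" "\<not>E u w"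
  proof -
    note h2 = symm[OF h(1)] nsym[OF h(2)] nsym[OF h(3)] symm[OF h(4)] symm[OF h(5)] nsym[OF h(6)]
    show False by (rule P5w[where pa=a1 and pb=a2 and pc=u and pd=x and pe=a4, OF P5free symm irr]) (simp_all add: F h h2)
  qed
  have c50: False if h: "E x a0" "\<not>E x a1" "\<not>E x a2" "E x a3" "E x a4" "E u w"
  proof -
    note h2 = symm[OF h(1)] nsym[OF h(2)] nsym[OF h(3)] symm[OF h(4)] symm[OF h(5)] symm[OF h(6)]
    show False by (rule P5w[where pa=a1 and pb=a2 and pc=u and pd=x and pe=a4, OF P5free symm irr]) (simp_all add: F h h2)
  qed
  have c51: False if h: "\<not>E x a0" "E x a1" "\<not>E x a2" "E x a3" "E x a4" "\<not>E u w"
  proof -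
    note h2 = nsym[OF h(1)] symm[OF h(2)] nsym[OF h(3)] symm[OF h(4)] symm[OF h(5)] nsym[OF h(6)]
    show False by (rule P5w[where pa=a2 and pb=w and pc=a0 and pd=a4 and pe=x, OF P5free symm irr]) (simp_all add: F h h2)
  qed
  have c52: False if h: "\<not>E x a0" "E x a1" "\<not>E x a2" "E x a3" "E x a4" "E u w"
  proof -
    note h2 = nsym[OF h(1)] symm[OF h(2)] nsym[OF h(3)] symm[OF h(4)] symm[OF h(5)] symm[OF h(6)]
    show False by (rule P5w[where pa=a2 and pb=w and pc=a0 and pd=a4 and pe=x, OF P5free symm irr]) (simp_all add: F h h2)
  qed
  have c53: False if h: "E x a0" "E x a1" "\<not>E x a2" "E x a3" "E x a4" "\<not>E u w"
  proof -
    note h2 = symm[OF h(1)] symm[OF h(2)] nsym[OF h(3)] symm[OF h(4)] symm[OF h(5)] nsym[OF h(6)]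
    show False by (rule P5w[where pa=a4 and pb=x and pc=a1 and pd=a2 and pe=w, OF P5free symm irr]) (simp_all add: F h h2)
  qed
  have c54: False if h: "E x a0" "E x a1" "\<not>E x a2" "E x a3" "E x a4" "E u w"
  proof -
    note h2 = symm[OF h(1)] symm[OF h(2)] nsym[OF h(3)] symm[OF h(4)] symm[OF h(5)] symm[OF h(6)]
    show False by (rule P5w[where pa=a4 and pb=x and pc=a1 and pd=a2 and pe=w, OF P5free symm irr]) (simp_all add: F h h2)
  qed
  have c55: False if h: "\<not>E x a0" "\<not>E x a1" "E x a2" "E x a3" "E x a4" "\<not>E u w"
  proof -
    note h2 = nsym[OF h(1)] nsym[OF h(2)] symm[OF h(3)] symm[OF h(4)] symm[OF h(5)] nsym[OF h(6)]
    show False by (rule P5w[where pa=a1 and pb=a0 and pc=w and pd=a3 and pe=x, OF P5free symm irr]) (simp_all add: F h h2)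
  qed
  have c56: False if h: "\<not>E x a0" "\<not>E x a1" "E x a2" "E x a3" "E x a4" "E u w"
  proof -
    note h2 = nsym[OF h(1)] nsym[OF h(2)] symm[OF h(3)] symm[OF h(4)] symm[OF h(5)] symm[OF h(6)]
    show False by (rule P5w[where pa=a1 and pb=a0 and pc=w and pd=a3 and pe=x, OF P5free symm irr]) (simp_all add: F h h2)
  qed
  have c57: False if h: "E x a0" "\<not>E x a1" "E x a2" "E x a3" "E x a4" "\<not>E u w"
  proof -
    note h2 = symm[OF h(1)] nsym[OF h(2)] symm[OF h(3)] symm[OF h(4)] symm[OF h(5)] nsym[OF h(6)]
    show False by (rule CHw[where pa=a1 and pb=a2 and pc=x and pd=a4 and pe=w, OF chairfree symm irr]) (simp_all add: F h h2)
  qed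
  have c58: False if h: "E x a0" "\<not>E x a1" "E x a2" "E x a3" "E x a4" "E u w"
  proof -
    note h2 = symm[OF h(1)] nsym[OF h(2)] symm[OF h(3)] symm[OF h(4)] symm[OF h(5)] symm[OF h(6)]
    show False by (rule CHw[where pa=a1 and pb=a2 and pc=x and pd=a4 and pe=w, OF chairfree symm irr]) (simp_all add: F h h2)
  qed
  show False
    apply (cases "E x a0"; cases "E x a1"; cases "E x a2"; cases "E x a3"; cases "E x a4"; cases "E u w")
    subgoal by (rule ex3r) assumption+
    subgoal by (rule ex3r) assumption+
    subgoal by (rule c30) assumption+
    subgoal by (rule c29) assumption+
    subgoal by (rule c46) assumption+
    subgoal by (rule c45) assumption+
    subgoal by (rule c16) assumption+
    subgoal by (rule c15) assumption+
    subgoal by (rule c54) assumption+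
    subgoal by (rule c53) assumption+
    subgoal by (rule c24) assumption+
    subgoal by (rule c23) assumption+
    subgoal by (rule c38) assumption+
    subgoal by (rule c37) assumption+
    subgoal by (rule c8) assumption+
    subgoal by (rule c7) assumption+
    subgoal by (rule c58) assumption+
    subgoal by (rule c57) assumption+
    subgoal by (rule ex1r) assumption+
    subgoal by (rule ex1r) assumption+
    subgoal by (rule c42) assumption+
    subgoal by (rule c41) assumption+
    subgoal by (rule c12) assumption+
    subgoal by (rule c11) assumption+
    subgoal by (rule c50) assumption+
    subgoal by (rule c49) assumption+
    subgoal by (rule c20) assumption+
    subgoal by (rule c19) assumption+
    subgoal by (rule c34) assumption+
    subgoal by (rule c33) assumption+
    subgoal by (rule c4) assumption+
    subgoal by (rule c3) assumption+
    subgoal by (rule ex2r) assumption+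
    subgoal by (rule ex2r) assumption+
    subgoal by (rule c28) assumption+
    subgoal by (rule c27) assumption+
    subgoal by (rule c44) assumption+
    subgoal by (rule c43) assumption+
    subgoal by (rule c14) assumption+
    subgoal by (rule c13) assumption+
    subgoal by (rule c52) assumption+
    subgoal by (rule c51) assumption+
    subgoal by (rule c22) assumption+
    subgoal by (rule c21) assumption+
    subgoal by (rule c36) assumption+
    subgoal by (rule c35) assumption+
    subgoal by (rule c6) assumption+
    subgoal by (rule c5) assumption+
    subgoal by (rule c56) assumption+
    subgoal by (rule c55) assumption+
    subgoal by (rule c26) assumption+
    subgoal by (rule c25) assumption+
    subgoal by (rule c40) assumption+
    subgoal by (rule c39) assumption+
    subgoal by (rule c10) assumption+
    subgoal by (rule c9) assumption+
    subgoal by (rule c48) assumption+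
    subgoal by (rule c47) assumption+
    subgoal by (rule c18) assumption+
    subgoal by (rule c17) assumption+
    subgoal by (rule c32) assumption+
    subgoal by (rule c31) assumption+
    subgoal by (rule c2) assumption+
    subgoal by (rule c1) assumption+
    done

  qed
qed

theorem mainTheorem7:
  fixes V :: "'a set" and E :: "'a \<Rightarrow> 'a \<Rightarrow> bool" and v :: "nat \<Rightarrow> 'a"
  assumes "simple_graph V E"
    and "vertex_critical V E 5"
    and "H_free V E {0..<5::nat} P5_E"
    and "H_free V E {0..<5::nat} chair_E"
    and "induced_C5 V E v"
  shows "\<forall>i<5. \<forall>x \<in> V - (S23 V E v i \<union> S4 V E v i \<union> S5 V E v).
           complete_to E x (S23 V E v i) \<or> anticomplete_to E x (S23 V E v i)"
proof (intro allI impI ballI)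
  fix i x assume i: "i < (5::nat)" and x: "x \<in> V - (S23 V E v i \<union> S4 V E v i \<union> S5 V E v)"
  have symm: "\<And>a b. E a b \<Longrightarrow> E b a" and irr: "\<And>a. \<not> E a a"
    using assms(1) unfolding simple_graph_def by blast+
  have vV: "\<And>p. p < 5 \<Longrightarrow> v p \<in> V" and inj: "inj_on v {..<5}"
    and Ev: "\<And>p q. p < 5 \<Longrightarrow> q < 5 \<Longrightarrow> E (v p) (v q) \<longleftrightarrow> (q = (p+1) mod 5 \<or> p = (q+1) mod 5)"
    using assms(5) unfolding induced_C5_def by blast+
  have vinj: "\<And>p q. p < 5 \<Longrightarrow> q < 5 \<Longrightarrow> v p = v q \<longleftrightarrow> p = q"
    using inj by (simp add: inj_on_eq_iff)
  define a0 where "a0 = v (i mod 5)"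
  define a1 where "a1 = v ((i+1) mod 5)"
  define a2 where "a2 = v ((i+2) mod 5)"
  define a3 where "a3 = v ((i+3) mod 5)"
  define a4 where "a4 = v ((i+4) mod 5)"
  note adefs = a0_def a1_def a2_def a3_def a4_def
  have ic: "i = 0 \<or> i = 1 \<or> i = 2 \<or> i = 3 \<or> i = 4" using i by auto
  have l5: "{..<5::nat} = {0,1,2,3,4}" by auto
  have C5': "C5_set v = {v 0, v 1, v 2, v 3, v 4}" unfolding C5_set_def l5 by simp
  have CS: "C5_set v = {a0,a1,a2,a3,a4}"
    using ic unfolding C5' adefs by (elim disjE) (simp_all add: insert_commute numeral_2_eq_2)
  have aV: "a0 \<in> V" "a1 \<in> V" "a2 \<in> V" "a3 \<in> V" "a4 \<in> V"
    unfolding adefs by (simp_all add: vV)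
  have dA: "distinct [a0,a1,a2,a3,a4]"
    using ic unfolding adefs by (elim disjE) (simp_all add: vinj)
  have cyc: "E a0 a1" "E a1 a2" "E a2 a3" "E a3 a4" "E a4 a0"
      "\<not>E a0 a2" "\<not>E a0 a3" "\<not>E a1 a3" "\<not>E a1 a4" "\<not>E a2 a4"
    using ic unfolding adefs by (elim disjE; simp add: Ev)+
  have NC: "N_C E v y = {c\<in>{a0,a1,a2,a3,a4}. E y c}" for y
    unfolding N_C_def CS by simp
  have s23: "S23 V E v i = {u \<in> V - {a0,a1,a2,a3,a4}. {c\<in>{a0,a1,a2,a3,a4}. E u c} = {a3,a0,a2}}"
    unfolding S23_def NC CS adefs by simp
  have s4: "S4 V E v i = {u \<in> V - {a0,a1,a2,a3,a4}. {c\<in>{a0,a1,a2,a3,a4}. E u c} = {a3,a4,a1,a2}}"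
    unfolding S4_def NC CS adefs by simp
  have s5: "S5 V E v = {u \<in> V - {a0,a1,a2,a3,a4}. {c\<in>{a0,a1,a2,a3,a4}. E u c} = {a0,a1,a2,a3,a4}}"
    unfolding S5_def NC CS by simp
  show "complete_to E x (S23 V E v i) \<or> anticomplete_to E x (S23 V E v i)"
  proof (rule ccontr)
    assume "\<not> (complete_to E x (S23 V E v i) \<or> anticomplete_to E x (S23 V E v i))"
    then obtain u w where u: "u \<in> S23 V E v i" "E x u" and w: "w \<in> S23 V E v i" "\<not> E x w"
      unfolding complete_to_def anticomplete_to_def by blast
    have uu: "u \<in> V" "u \<notin> {a0,a1,a2,a3,a4}" "{c\<in>{a0,a1,a2,a3,a4}. E u c} = {a3,a0,a2}"
      using u(1) unfolding s23 by blast+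
    have ww: "w \<in> V" "w \<notin> {a0,a1,a2,a3,a4}" "{c\<in>{a0,a1,a2,a3,a4}. E w c} = {a3,a0,a2}"
      using w(1) unfolding s23 by blast+
    have xV: "x \<in> V" using x by blast
    show False
    proof (rule core[OF assms(3) assms(4) symm irr aV uu(1) ww(1) xV dA cyc uu(2) ww(2) uu(3) ww(3) _ _ _ u(2) w(2)])
      show "x \<notin> {a0,a1,a2,a3,a4} \<Longrightarrow> {c\<in>{a0,a1,a2,a3,a4}. E x c} \<noteq> {a3,a0,a2}"
        using x xV unfolding s23 by blast
      show "x \<notin> {a0,a1,a2,a3,a4} \<Longrightarrow> {c\<in>{a0,a1,a2,a3,a4}. E x c} \<noteq> {a3,a4,a1,a2}"
        using x xV unfolding s4 by blast
      show "x \<notin> {a0,a1,a2,a3,a4} \<Longrightarrow> {c\<in>{a0,a1,a2,a3,a4}. E x c} \<noteq> {a0,a1,a2,a3,a4}"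
        using x xV unfolding s5 by blast
    qed
  qed
qed

end
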